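(* For every ordered graph $H$ and every $\varepsilon>0$ there exists $C\in\mathbb{N}$ such that for all $d\in\mathbb{N}$ and all subsets $\mathcal{L}\subseteq[d]$ with $|\mathcal{L}|\ge C$, there exists a random variable $\Phi$ taking values in the set of embeddings of $H$ into the complete ordered graph $K$ on $\{0,1\}^d$ with the following property. For all but at most $\varepsilon|\mathcal{L}|$ levels $\ell\in\mathcal{L}$, all but at most an $\varepsilon$-proportion of the pairs $\{x,y\}\subseteq\{0,1\}^d$ with $\delta(x,y)=\ell$ satisfy \[ \mathbb{P}(xy\in\Phi(H))\ge(1-\varepsilon)\frac{e(H)}{|\mathcal{L}|\,\tau_{\ell,d}}. \]
   Context: An ordered graph is a graph with a totally ordered vertex set. An embedding of an ordered graph $H$ into an ordered graph $K$ is an injective order-preserving map $V(H)\to V(K)$ sending edges to edges; $\Phi(H)$ denotes the image of $H$ (so $xy\in\Phi(H)$ means $xy$ is the image of an edge of $H$). For distinct $x,y\in\{0,1\}^d$, $\delta(x,y)=\min\{i:x_i\ne y_i\}$; $\{0,1\}^d$ is ordered lexicographically ($x<y$ iff $x_{\delta(x,y)}=0$). $\tau_{\ell,d}=2^{2d-\ell-1}$ is the number of pairs $\{x,y\}\subseteq\{0,1\}^d$ with $\delta(x,y)=\ell$. *)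

theory Defs
  imports "HOL-Probability.Probability_Mass_Function"
begin

text \<open>The cube {0,1}^d: boolean lists of length d (False = 0, True = 1).
  Coordinates are 1-based in the paper: coordinate i is list entry i-1.\<close>
definition cube :: "nat \<Rightarrow> bool list set" where
  "cube d = {xs. length xs = d}"

definition delta :: "bool list \<Rightarrow> bool list \<Rightarrow> nat" where
  "delta x y = Min {i \<in> {1..length x}. x ! (i - 1) \<noteq> y ! (i - 1)}"

definition lex_less :: "bool list \<Rightarrow> bool list \<Rightarrow> bool" where
  "lex_less x y \<longleftrightarrow> x \<noteq> y \<and> \<not> x ! (delta x y - 1)"

definition tau :: "nat \<Rightarrow> nat \<Rightarrow> nat" where
  "tau l d = 2 ^ (2 * d - l - 1)"

definition ordered_graph :: "'a::linorder set \<Rightarrow> 'a set set \<Rightarrow> bool" where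
  "ordered_graph V E \<longleftrightarrow> finite V \<and> E \<subseteq> {{u, v} | u v. u \<in> V \<and> v \<in> V \<and> u \<noteq> v}"

text \<open>Embeddings of (V,E) into the complete ordered graph K on {0,1}^d:
  order-preserving (hence injective) maps V \<rightarrow> {0,1}^d; edge preservation is
  automatic as K is complete.\<close>
definition embeddings :: "'a::linorder set \<Rightarrow> 'a set set \<Rightarrow> nat \<Rightarrow> ('a \<Rightarrow> bool list) set" where
  "embeddings V E d = {\<phi>. (\<forall>u\<in>V. \<phi> u \<in> cube d) \<and>
      (\<forall>u\<in>V. \<forall>v\<in>V. u < v \<longrightarrow> lex_less (\<phi> u) (\<phi> v))}"

definition image_graph :: "('a \<Rightarrow> bool list) \<Rightarrow> 'a set set \<Rightarrow> bool list set set" where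
  "image_graph \<phi> E = (\<lambda>e. \<phi> ` e) ` E"

definition pairs_at :: "nat \<Rightarrow> nat \<Rightarrow> bool list set set" where
  "pairs_at d l = {{x, y} | x y. x \<in> cube d \<and> y \<in> cube d \<and> x \<noteq> y \<and> delta x y = l}"

end

theory Submission
  imports Defs
begin

lemma cube_finite[simp]: "finite (cube d)"
proof -
  have "cube d = {xs. set xs \<subseteq> (UNIV::bool set) \<and> length xs = d}" by (auto simp: cube_def)
  then show ?thesis using finite_lists_length_eq[of "UNIV::bool set" d] by simp
qed

lemma cube_card: "card (cube d) = 2 ^ d"
proof -
  have "cube d = {xs. set xs \<subseteq> (UNIV::bool set) \<and> length xs = d}" by (auto simp: cube_def)
  then show ?thesis using card_lists_length_eq[of "UNIV::bool set" d] by simp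
qed

lemma cube_card_constr:
  "card {x\<in>cube d. \<forall>p<d. x!p \<in> F p} = (\<Prod>p<d. card (F p))"
proof -
  have "bij_betw (\<lambda>x. restrict (\<lambda>p. x!p) {..<d}) {x\<in>cube d. \<forall>p<d. x!p \<in> F p} (PiE {..<d} F)"
  proof (rule bij_betw_byWitness[where f'="\<lambda>f. map f [0..<d]"])
    show "\<forall>a\<in>{x \<in> cube d. \<forall>p<d. x ! p \<in> F p}. map (restrict ((!) a) {..<d}) [0..<d] = a"
      by (auto simp: cube_def intro!: nth_equalityI)
    show "\<forall>a'\<in>PiE {..<d} F. restrict ((!) (map a' [0..<d])) {..<d} = a'"
      by (auto simp: PiE_def extensional_def fun_eq_iff)
    show "(\<lambda>x. restrict ((!) x) {..<d}) ` {x \<in> cube d. \<forall>p<d. x ! p \<in> F p} \<subseteq> PiE {..<d} F"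
      by auto
    show "(\<lambda>f. map f [0..<d]) ` PiE {..<d} F \<subseteq> {x \<in> cube d. \<forall>p<d. x ! p \<in> F p}"
      by (auto simp: cube_def PiE_def Pi_def)
  qed
  then show ?thesis by (simp add: bij_betw_same_card card_PiE)
qed

lemma cube_card_fix:
  assumes "A \<subseteq> {..<d}"
  shows "card {x\<in>cube d. \<forall>p\<in>A. x!p = w!p} = 2 ^ (d - card A)"
proof -
  have "{x\<in>cube d. \<forall>p\<in>A. x!p = w!p} = {x\<in>cube d. \<forall>p<d. x!p \<in> (if p \<in> A then {w!p} else UNIV)}"
    using assms by auto
  also have "card \<dots> = (\<Prod>p<d. card (if p \<in> A then {w!p} else (UNIV::bool set)))"
    by (rule cube_card_constr)
  also have "\<dots> = (\<Prod>p<d. (if p \<in> A then 1 else 2))"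
    by (rule prod.cong) auto
  also have "\<dots> = 2 ^ card ({..<d} \<inter> - A)"
    by (simp add: prod.If_cases)
  also have "card ({..<d} \<inter> - A) = d - card A"
  proof -
    have "{..<d} \<inter> - A = {..<d} - A" by auto
    then show ?thesis using assms by (simp add: card_Diff_subset finite_subset)
  qed
  finally show ?thesis .
qed



definition sg :: "bool \<Rightarrow> real" where "sg b = (if b then 1 else -1)"

lemma cross_zero:
  assumes "p \<noteq> q" "p < d" "q < d"
  shows "(\<Sum>x\<in>cube d. sg (x!p) * sg (x!q)) = 0"
proof -
  define h where "h x = x[p := \<not> x!p]" for x :: "bool list"
  have hh: "h (h x) = x" for x unfolding h_def by (cases "p < length x") (auto simp: list_update_beyond)
  have hc: "x \<in> cube d \<Longrightarrow> h x \<in> cube d" for x by (simp add: h_def cube_def)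
  have bij: "bij_betw h (cube d) (cube d)"
    by (rule bij_betw_byWitness[where f'=h]) (auto simp: hh hc)
  have "(\<Sum>x\<in>cube d. sg (x!p) * sg (x!q)) = (\<Sum>x\<in>cube d. sg (h x!p) * sg (h x!q))"
    using sum.reindex_bij_betw[OF bij, of "\<lambda>x. sg (x!p) * sg (x!q)"] by simp
  also have "\<dots> = (\<Sum>x\<in>cube d. - (sg (x!p) * sg (x!q)))"
    by (rule sum.cong) (use assms in \<open>auto simp: h_def cube_def sg_def\<close>)
  finally show ?thesis by (simp add: sum_negf)
qed

lemma cheb_sum:
  assumes inj: "inj_on f {..<K}" and rng: "f ` {..<K} \<subseteq> {..<d}"
  shows "(\<Sum>x\<in>cube d. (\<Sum>g<K. sg (x!(f g)))^2) = real K * 2^d"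
proof -
  have "(\<Sum>x\<in>cube d. (\<Sum>g<K. sg (x!(f g)))^2) = (\<Sum>x\<in>cube d. \<Sum>g<K. \<Sum>g'<K. sg (x!(f g)) * sg (x!(f g')))"
    by (simp add: power2_eq_square sum_product)
  also have "\<dots> = (\<Sum>g<K. \<Sum>x\<in>cube d. \<Sum>g'<K. sg (x!(f g)) * sg (x!(f g')))"
    by (rule sum.swap)
  also have "\<dots> = (\<Sum>g<K. \<Sum>g'<K. \<Sum>x\<in>cube d. sg (x!(f g)) * sg (x!(f g')))"
    by (rule sum.cong[OF refl], rule sum.swap)
  also have "\<dots> = (\<Sum>g<K. \<Sum>g'<K. if g = g' then 2^d else 0)"
  proof (intro sum.cong refl)
    fix g g' assume "g \<in> {..<K}" "g' \<in> {..<K}"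
    then show "(\<Sum>x\<in>cube d. sg (x!(f g)) * sg (x!(f g'))) = (if g = g' then 2^d else 0)"
    proof (cases "g = g'")
      case True
      then have "\<And>x. sg (x!(f g)) * sg (x!(f g')) = 1" by (simp add: sg_def)
      then show ?thesis using True by (simp add: cube_card)
    next
      case False
      then have "f g \<noteq> f g'" using inj \<open>g \<in> _\<close> \<open>g' \<in> _\<close> by (auto dest: inj_onD)
      moreover have "f g < d" "f g' < d" using rng \<open>g \<in> _\<close> \<open>g' \<in> _\<close> by auto
      ultimately show ?thesis using cross_zero False by simp
    qed
  qed
  also have "\<dots> = real K * 2^d" by simp
  finally show ?thesis .
qed

lemma cheb_count:
  assumes inj: "inj_on f {..<K}" and rng: "f ` {..<K} \<subseteq> {..<d}" and t: "t > 0"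
  shows "real (card {x\<in>cube d. t < \<bar>\<Sum>g<K. sg (x!(f g))\<bar>}) \<le> real K * 2^d / t^2"
proof -
  let ?B = "{x\<in>cube d. t < \<bar>\<Sum>g<K. sg (x!(f g))\<bar>}"
  have "real (card ?B) * t^2 = (\<Sum>x\<in>?B. t^2)" by simp
  also have "\<dots> \<le> (\<Sum>x\<in>?B. (\<Sum>g<K. sg (x!(f g)))^2)"
  proof (rule sum_mono)
    fix x assume "x \<in> ?B"
    then have "t < \<bar>\<Sum>g<K. sg (x!(f g))\<bar>" by simp
    then have "t^2 \<le> \<bar>\<Sum>g<K. sg (x!(f g))\<bar>^2" using t by (intro power_mono) auto
    then show "t^2 \<le> (\<Sum>g<K. sg (x!(f g)))^2" by simp
  qed
  also have "\<dots> \<le> (\<Sum>x\<in>cube d. (\<Sum>g<K. sg (x!(f g)))^2)"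
    by (rule sum_mono2) (auto simp: cube_finite)
  also have "\<dots> = real K * 2^d" by (rule cheb_sum[OF inj rng])
  finally have "real (card ?B) * t^2 \<le> real K * 2^d" .
  moreover have t2: "t^2 > 0" using t by (rule zero_less_power)
  ultimately show ?thesis by (simp only: pos_le_divide_eq[OF t2])
qed



lemma delta_eqI:
  assumes "x \<in> cube d" "y \<in> cube d" "q < d" "\<forall>p<q. x!p = y!p" "x!q \<noteq> y!q"
  shows "delta x y = q + 1"
  unfolding delta_def
proof (rule Min_eqI)
  show "finite {i \<in> {1..length x}. x ! (i - 1) \<noteq> y ! (i - 1)}" by simp
  show "q + 1 \<in> {i \<in> {1..length x}. x ! (i - 1) \<noteq> y ! (i - 1)}" using assms by (auto simp: cube_def)
  fix z assume "z \<in> {i \<in> {1..length x}. x ! (i - 1) \<noteq> y ! (i - 1)}"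
  then have z: "1 \<le> z" "x!(z-1) \<noteq> y!(z-1)" by auto
  show "q + 1 \<le> z"
  proof (rule ccontr)
    assume "\<not> q + 1 \<le> z"
    then have "z - 1 < q" using z by simp
    then show False using assms(4) z by auto
  qed
qed

lemma lex_lessI:
  assumes "x \<in> cube d" "y \<in> cube d" "q < d" "\<forall>p<q. x!p = y!p" "\<not> x!q" "y!q"
  shows "lex_less x y"
proof -
  have "delta x y = q + 1" using delta_eqI[OF assms(1-4)] assms(5,6) by auto
  then show ?thesis unfolding lex_less_def using assms(5,6) by auto
qed

lemma delta_props:
  assumes "x \<in> cube d" "y \<in> cube d" "x \<noteq> y"
  shows "1 \<le> delta x y \<and> delta x y \<le> d \<and> x!(delta x y - 1) \<noteq> y!(delta x y - 1) \<and> (\<forall>p < delta x y - 1. x!p = y!p)"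
proof -
  let ?A = "{i \<in> {1..length x}. x ! (i - 1) \<noteq> y ! (i - 1)}"
  have lx: "length x = d" "length y = d" using assms by (auto simp: cube_def)
  have "\<exists>p<d. x!p \<noteq> y!p"
  proof (rule ccontr)
    assume "\<not> (\<exists>p<d. x!p \<noteq> y!p)"
    then have "x = y" using lx by (intro nth_equalityI) auto
    then show False using assms by simp
  qed
  then obtain p where p: "p < d" "x!p \<noteq> y!p" by blast
  have "p+1 \<in> ?A" using p lx by auto
  then have ne: "?A \<noteq> {}" by blast
  have fin: "finite ?A" by simp
  have mem: "delta x y \<in> ?A" unfolding delta_def using Min_in[OF fin ne] .
  have low: "\<forall>p < delta x y - 1. x!p = y!p"
  proof (intro allI impI)
    fix q assume q: "q < delta x y - 1"
    show "x!q = y!q"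
    proof (rule ccontr)
      assume "x!q \<noteq> y!q"
      then have "q + 1 \<in> ?A" using q mem lx by auto
      then have "delta x y \<le> q + 1" unfolding delta_def by (rule Min_le[OF fin])
      then show False using q by simp
    qed
  qed
  show ?thesis using mem low lx by auto
qed

locale cons =
  fixes L :: "nat set" and d K NB n :: nat
  assumes L_sub: "L \<subseteq> {1..d}" and Kpos: "0 < K" and room: "(NB + n) * K \<le> card L"
begin

definition ls :: "nat list" where "ls = sorted_list_of_set L"
definition pos :: "nat \<Rightarrow> nat \<Rightarrow> nat" where "pos \<beta> g = ls ! (\<beta>*K + g) - 1"
definition Mp :: "nat \<Rightarrow> (nat \<Rightarrow> nat) \<Rightarrow> nat \<Rightarrow> nat" where
  "Mp b g k = (if k < n - 1 then pos (b+k) (g k) else d)"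
definition bt :: "nat \<Rightarrow> (nat \<Rightarrow> nat) \<Rightarrow> (nat \<Rightarrow> bool list) \<Rightarrow> nat \<Rightarrow> nat \<Rightarrow> bool" where
  "bt b g Y k p = (if Mp b g k < p then Y k ! p else if p = Mp b g k then False
      else if (\<exists>u<n-1. Mp b g u = p) then True else Y n ! p)"
definition Xs :: "nat \<Rightarrow> (nat \<Rightarrow> nat) \<Rightarrow> (nat \<Rightarrow> bool list) \<Rightarrow> nat \<Rightarrow> bool list" where
  "Xs b g Y k = map (bt b g Y k) [0..<d]"
definition Gs :: "(nat \<Rightarrow> nat) set" where "Gs = PiE {..<n-1} (\<lambda>_. {..<K})"
definition Ys :: "(nat \<Rightarrow> bool list) set" where "Ys = PiE {..<Suc n} (\<lambda>_. cube d)"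
definition S where "S = {..<NB} \<times> Gs \<times> Ys"

lemma finL: "finite L" using L_sub finite_subset by blast

lemma len_ls: "length ls = card L" by (simp add: ls_def finL)

lemma ls_in: "r < card L \<Longrightarrow> ls!r \<in> L"
  using len_ls by (metis finL ls_def nth_mem set_sorted_list_of_set)

lemma ls_range: "r < card L \<Longrightarrow> 1 \<le> ls!r \<and> ls!r \<le> d"
proof -
  assume "r < card L"
  then have "ls!r \<in> L" by (rule ls_in)
  then have "ls!r \<in> {1..d}" using L_sub by blast
  then show ?thesis by simp
qed

lemma ls_mono: "r < r' \<Longrightarrow> r' < card L \<Longrightarrow> ls!r < ls!r'"
  using sorted_wrt_nth_less[of "(<)" ls r r'] len_ls unfolding ls_def
  by (simp add: finL)

lemma ls_inj: "r < card L \<Longrightarrow> r' < card L \<Longrightarrow> ls!r = ls!r' \<Longrightarrow> r = r'"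
  using ls_mono by (metis less_irrefl nat_neq_iff)

lemma pos_lt: "\<beta>*K+g < card L \<Longrightarrow> pos \<beta> g < d"
  using ls_range[of "\<beta>*K+g"] unfolding pos_def by auto

lemma pos_mono: "\<beta>*K+g < \<beta>'*K+g' \<Longrightarrow> \<beta>'*K+g' < card L \<Longrightarrow> pos \<beta> g < pos \<beta>' g'"
  using ls_mono[of "\<beta>*K+g" "\<beta>'*K+g'"] ls_range[of "\<beta>*K+g"] unfolding pos_def by auto

lemma idx_lt:
  assumes "b < NB" "k < n - 1" "gk < K"
  shows "(b+k)*K + gk < card L"
proof -
  have "(b+k)*K + gk < (b+k)*K + K" using assms by simp
  also have "\<dots> = (b+k+1)*K" by simp
  also have "\<dots> \<le> (NB+n)*K" using assms by (intro mult_le_mono1) auto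
  finally show ?thesis using room by simp
qed

lemma idx_mono:
  assumes "k < k'" "gk < K"
  shows "(b+k)*K + gk < (b+k')*K + gk'"
proof -
  have "(b+k)*K + gk < (b+k)*K + K" using assms by simp
  also have "\<dots> = (b+k+1)*K" by simp
  also have "\<dots> \<le> (b+k')*K" using assms by (intro mult_le_mono1) auto
  finally show ?thesis by simp
qed

lemma Gs_lt: "g \<in> Gs \<Longrightarrow> k < n - 1 \<Longrightarrow> g k < K"
  unfolding Gs_def by auto

lemma Mp_lt_d: "b < NB \<Longrightarrow> g \<in> Gs \<Longrightarrow> k < n - 1 \<Longrightarrow> Mp b g k < d"
  unfolding Mp_def using pos_lt idx_lt Gs_lt by simp

lemma Mp_le_d: "b < NB \<Longrightarrow> g \<in> Gs \<Longrightarrow> Mp b g k \<le> d"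
  using Mp_lt_d[of b g k] by (cases "k < n - 1") (auto simp: Mp_def)

lemma Mp_mono:
  assumes "b < NB" "g \<in> Gs" "k < k'" "k' < n"
  shows "Mp b g k < Mp b g k'"
proof (cases "k' < n - 1")
  case True
  then have "k < n - 1" using assms by simp
  then show ?thesis unfolding Mp_def using True assms
    by (simp add: pos_mono idx_mono Gs_lt idx_lt)
next
  case False
  then have "k < n - 1" using assms by simp
  then show ?thesis using Mp_lt_d[OF assms(1,2)] False by (simp add: Mp_def)
qed

lemma Mp_inj: "b < NB \<Longrightarrow> g \<in> Gs \<Longrightarrow> k < n \<Longrightarrow> k' < n \<Longrightarrow> Mp b g k = Mp b g k' \<Longrightarrow> k = k'"
  using Mp_mono by (metis less_irrefl nat_neq_iff)

lemma Mp_less_iff: "b < NB \<Longrightarrow> g \<in> Gs \<Longrightarrow> k < n \<Longrightarrow> k' < n \<Longrightarrow> Mp b g k < Mp b g k' \<longleftrightarrow> k < k'"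
  using Mp_mono by (metis less_asym nat_neq_iff)

lemma Xs_cube: "Xs b g Y k \<in> cube d" by (simp add: Xs_def cube_def)

lemma Xs_nth: "p < d \<Longrightarrow> Xs b g Y k ! p = bt b g Y k p" by (simp add: Xs_def)

lemma sep:
  assumes "b < NB" "g \<in> Gs" "u < v" "v < n"
  shows "(\<forall>p<Mp b g u. bt b g Y u p = bt b g Y v p) \<and> \<not> bt b g Y u (Mp b g u) \<and> bt b g Y v (Mp b g u)"
proof -
  have uv: "Mp b g u < Mp b g v" using Mp_mono assms by simp
  have u1: "u < n - 1" using assms by simp
  have A: "bt b g Y u p = bt b g Y v p" if "p < Mp b g u" for p
  proof -
    have "\<not> Mp b g u < p" "p \<noteq> Mp b g u" "\<not> Mp b g v < p" "p \<noteq> Mp b g v" using that uv by auto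
    then show ?thesis by (simp add: bt_def)
  qed
  have B: "\<not> bt b g Y u (Mp b g u)" by (simp add: bt_def)
  have "\<not> Mp b g v < Mp b g u" "Mp b g u \<noteq> Mp b g v" "\<exists>w<n-1. Mp b g w = Mp b g u" using uv u1 by auto
  then have C: "bt b g Y v (Mp b g u)" by (simp add: bt_def)
  show ?thesis using A B C by blast
qed

lemma Xs_lex:
  assumes "b < NB" "g \<in> Gs" "u < v" "v < n"
  shows "lex_less (Xs b g Y u) (Xs b g Y v)"
proof -
  have "Mp b g u < d" using Mp_lt_d assms by simp
  then show ?thesis using sep[OF assms, of Y]
    by (intro lex_lessI[where q="Mp b g u" and d=d]) (auto simp: Xs_cube Xs_nth)
qed

end



lemma sg_count:
  fixes F :: "nat \<Rightarrow> bool" and e :: real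
  assumes "\<bar>\<Sum>g<K. sg (F g)\<bar> \<le> e * K"
  shows "(1-e)*K \<le> 2 * real (card {g. g < K \<and> F g})" "(1-e)*K \<le> 2 * real (card {g. g < K \<and> \<not> F g})"
proof -
  have "(\<Sum>g<K. sg (F g)) = (\<Sum>g\<in>{..<K} \<inter> {g. F g}. 1) + (\<Sum>g\<in>{..<K} \<inter> - {g. F g}. -1)"
    unfolding sg_def by (rule sum.If_cases) simp
  also have "{..<K} \<inter> {g. F g} = {g. g < K \<and> F g}" by auto
  also have "{..<K} \<inter> - {g. F g} = {g. g < K \<and> \<not> F g}" by auto
  finally have s: "(\<Sum>g<K. sg (F g)) = real (card {g. g < K \<and> F g}) - real (card {g. g < K \<and> \<not> F g})"
    by simp
  have "card {g. g < K \<and> F g} + card {g. g < K \<and> \<not> F g} = card ({g. g < K \<and> F g} \<union> {g. g < K \<and> \<not> F g})"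
    by (rule card_Un_disjoint[symmetric]) auto
  also have "{g. g < K \<and> F g} \<union> {g. g < K \<and> \<not> F g} = {..<K}" by auto
  finally have t: "real (card {g. g < K \<and> F g}) + real (card {g. g < K \<and> \<not> F g}) = real K"
    by (metis card_lessThan of_nat_add)
  show "(1-e)*K \<le> 2 * real (card {g. g < K \<and> F g})" "(1-e)*K \<le> 2 * real (card {g. g < K \<and> \<not> F g})"
    using assms s t by (auto simp: algebra_simps abs_le_iff)
qed

context cons
begin

definition Xs' :: "nat \<times> (nat \<Rightarrow> nat) \<times> (nat \<Rightarrow> bool list) \<Rightarrow> nat \<Rightarrow> bool list" where
  "Xs' s = Xs (fst s) (fst (snd s)) (snd (snd s))"


context
  fixes bb i j gz P :: nat and a c :: "bool list"
  assumes bb: "bb < NB" and ij: "i < j" "j < n" and gz: "gz < K"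
    and Pdef: "pos (bb+i) gz = P"
    and ac: "a \<in> cube d" "c \<in> cube d" "\<forall>p<P. a!p = c!p" "\<not> a!P" "c!P"
begin

definition G :: "nat \<Rightarrow> nat set" where
  "G k = (if k = i then {gz} else if k < j then {g. g < K \<and> c!(pos (bb+k) g)}
      else if k = j then {g. g < K \<and> \<not> c!(pos (bb+k) g)} else {..<K})"

definition Ai :: "bool list set" where "Ai = {y\<in>cube d. \<forall>p\<in>{P<..<d}. y!p = a!p}"
definition Aj :: "(nat \<Rightarrow> nat) \<Rightarrow> bool list set" where
  "Aj g = {y\<in>cube d. \<forall>p\<in>{Mp bb g j<..<d}. y!p = c!p}"
definition As :: "(nat \<Rightarrow> nat) \<Rightarrow> bool list set" where
  "As g = {y\<in>cube d. \<forall>p\<in>{..<Mp bb g j} - Mp bb g ` {..<n-1}. y!p = c!p}"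
definition YY :: "(nat \<Rightarrow> nat) \<Rightarrow> (nat \<Rightarrow> bool list) set" where
  "YY g = PiE {..<Suc n} (\<lambda>v. if v = i then Ai else if v = j then Aj g else if v = n then As g else cube d)"
definition LS where "LS = {bb} \<times> Sigma (PiE {..<n-1} G) YY"

lemma i_lt: "i < n - 1" using ij by simp

lemma P_lt: "P < d"
  using pos_lt idx_lt[OF bb i_lt gz] Pdef by blast

lemma G_sub: "G k \<subseteq> {..<K}" using gz by (auto simp: G_def)

lemma PiG_Gs: "PiE {..<n-1} G \<subseteq> Gs"
  unfolding Gs_def using G_sub by (auto simp: PiE_def Pi_def)

lemma Mp_i: "g \<in> PiE {..<n-1} G \<Longrightarrow> Mp bb g i = P"
  using i_lt Pdef by (auto simp: Mp_def G_def PiE_def Pi_def)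

lemma compat1: "g \<in> PiE {..<n-1} G \<Longrightarrow> k < n - 1 \<Longrightarrow> k \<noteq> i \<Longrightarrow> k < j \<Longrightarrow> c!(Mp bb g k)"
proof -
  assume g: "g \<in> PiE {..<n-1} G" and k: "k < n - 1" "k \<noteq> i" "k < j"
  then have "g k \<in> G k" by auto
  then show ?thesis using k by (simp add: G_def Mp_def)
qed

lemma compat2: "g \<in> PiE {..<n-1} G \<Longrightarrow> j < n - 1 \<Longrightarrow> \<not> c!(Mp bb g j)"
proof -
  assume g: "g \<in> PiE {..<n-1} G" and k: "j < n - 1"
  then have "g j \<in> G j" by auto
  then show ?thesis using k ij by (simp add: G_def Mp_def)
qed

lemma fiber_pts:
  assumes g: "g \<in> PiE {..<n-1} G" and Y: "Y \<in> YY g"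
  shows "Xs bb g Y i = a \<and> Xs bb g Y j = c"
proof -
  have gG: "g \<in> Gs" using g PiG_Gs by blast
  have Ym: "Y v \<in> (if v = i then Ai else if v = j then Aj g else if v = n then As g else cube d)"
    if "v < Suc n" for v using PiE_mem[OF Y[unfolded YY_def], of v] that by simp
  have Yi: "Y i \<in> Ai" using Ym[of i] ij by simp
  have Yj: "Y j \<in> Aj g" using Ym[of j] ij by simp
  have Yn: "Y n \<in> As g" using Ym[of n] ij by simp
  have MiP: "Mp bb g i = P" using Mp_i g .
  have Mij: "Mp bb g i < Mp bb g j" using Mp_mono[OF bb gG ij] .
  have la: "length a = d" "length c = d" using ac by (auto simp: cube_def)
  have Xi: "Xs bb g Y i = a"
  proof (rule nth_equalityI)
    show "length (Xs bb g Y i) = length a" using la by (simp add: Xs_def)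
    fix p assume "p < length (Xs bb g Y i)"
    then have p: "p < d" by (simp add: Xs_def)
    show "Xs bb g Y i ! p = a ! p"
    proof (cases "P < p")
      case True
      then show ?thesis using Yi p MiP by (simp add: Xs_nth bt_def Ai_def)
    next
      case False
      show ?thesis
      proof (cases "p = P")
        case True
        then show ?thesis using MiP ac p by (simp add: Xs_nth bt_def)
      next
        case False2: False
        then have pP: "p < P" using False by simp
        show ?thesis
        proof (cases "\<exists>u<n-1. Mp bb g u = p")
          case True
          then obtain u where u: "u < n - 1" "Mp bb g u = p" by blast
          then have "u < i" using Mp_less_iff[OF bb gG, of u i] pP MiP ij by simp
          then have "c!p" using compat1[OF g u(1)] u ij by simp
          then show ?thesis using True pP MiP ac(3) p by (simp add: Xs_nth bt_def)
        next
          case nT: False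
          have "p \<in> {..<Mp bb g j} - Mp bb g ` {..<n-1}" using nT pP MiP Mij by auto
          then have "Y n ! p = c ! p" using Yn by (simp add: As_def)
          then show ?thesis using nT pP MiP ac(3) p by (auto simp: Xs_nth bt_def)
        qed
      qed
    qed
  qed
  have Xj: "Xs bb g Y j = c"
  proof (rule nth_equalityI)
    show "length (Xs bb g Y j) = length c" using la by (simp add: Xs_def)
    fix p assume "p < length (Xs bb g Y j)"
    then have p: "p < d" by (simp add: Xs_def)
    show "Xs bb g Y j ! p = c ! p"
    proof (cases "Mp bb g j < p")
      case True
      then show ?thesis using Yj p by (simp add: Xs_nth bt_def Aj_def)
    next
      case False
      show ?thesis
      proof (cases "p = Mp bb g j")
        case True
        then have "j < n - 1" using p by (cases "j < n - 1") (auto simp: Mp_def)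
        then have "\<not> c!p" using compat2[OF g] True by simp
        then show ?thesis using True p by (simp add: Xs_nth bt_def)
      next
        case False2: False
        then have pj: "p < Mp bb g j" using False by simp
        show ?thesis
        proof (cases "\<exists>u<n-1. Mp bb g u = p")
          case True
          then obtain u where u: "u < n - 1" "Mp bb g u = p" by blast
          then have uj: "u < j" using Mp_less_iff[OF bb gG, of u j] pj ij by simp
          have "c!p"
          proof (cases "u = i")
            case True
            then show ?thesis using u MiP ac by simp
          next
            case False
            then show ?thesis using compat1[OF g u(1)] u uj by simp
          qed
          then show ?thesis using True pj p by (simp add: Xs_nth bt_def)
        next
          case nT: False
          have "p \<in> {..<Mp bb g j} - Mp bb g ` {..<n-1}" using nT pj by auto
          then have "Y n ! p = c ! p" using Yn by (simp add: As_def)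
          then show ?thesis using nT pj p by (auto simp: Xs_nth bt_def)
        qed
      qed
    qed
  qed
  show ?thesis using Xi Xj by simp
qed

lemma LS_sub: "LS \<subseteq> S"
proof
  fix s assume "s \<in> LS"
  then obtain g Y where s: "s = (bb, g, Y)" "g \<in> PiE {..<n-1} G" "Y \<in> YY g"
    by (auto simp: LS_def)
  have "YY g \<subseteq> Ys"
    unfolding YY_def Ys_def by (rule PiE_mono) (auto simp: Ai_def Aj_def As_def)
  then have "Y \<in> Ys" using s(3) by blast
  then show "s \<in> S" using s PiG_Gs bb by (auto simp: S_def)
qed

lemma LS_fiber: "s \<in> LS \<Longrightarrow> Xs (fst s) (fst (snd s)) (snd (snd s)) i = a \<and> Xs (fst s) (fst (snd s)) (snd (snd s)) j = c"
  using fiber_pts by (auto simp: LS_def)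

lemma card_Ai: "card Ai = 2^(P+1)"
proof -
  have "card Ai = 2 ^ (d - card {P<..<d})" unfolding Ai_def by (rule cube_card_fix) auto
  then show ?thesis using P_lt by simp
qed

lemma card_Aj: "g \<in> Gs \<Longrightarrow> card (Aj g) = 2 ^ (d - (d - Suc (Mp bb g j)))"
proof -
  have "card (Aj g) = 2 ^ (d - card {Mp bb g j<..<d})" unfolding Aj_def by (rule cube_card_fix) auto
  then show ?thesis by simp
qed

lemma card_As:
  assumes g: "g \<in> Gs"
  shows "card (As g) = 2 ^ (d - (Mp bb g j - j))" "j \<le> Mp bb g j"
proof -
  let ?M = "Mp bb g"
  have jn: "j \<le> n - 1" using ij by simp
  have eq: "{..<?M j} - ?M ` {..<n-1} = {..<?M j} - ?M ` {..<j}"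
  proof (intro equalityI subsetI)
    fix x assume "x \<in> {..<?M j} - ?M ` {..<n-1}"
    then show "x \<in> {..<?M j} - ?M ` {..<j}" using jn by auto
  next
    fix x assume x: "x \<in> {..<?M j} - ?M ` {..<j}"
    show "x \<in> {..<?M j} - ?M ` {..<n-1}"
    proof (rule ccontr)
      assume "x \<notin> {..<?M j} - ?M ` {..<n-1}"
      then obtain k where k: "k < n - 1" "x = ?M k" using x by auto
      then have "k < j" using x Mp_less_iff[OF bb g, of k j] ij by auto
      then show False using x k by auto
    qed
  qed
  have sub: "?M ` {..<j} \<subseteq> {..<?M j}" using Mp_mono[OF bb g] ij by auto
  have inj: "inj_on ?M {..<j}" using Mp_inj[OF bb g] ij by (auto simp: inj_on_def)
  have cj: "card (?M ` {..<j}) = j" using card_image[OF inj] by simp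
  show "j \<le> ?M j" using card_mono[OF _ sub] cj by simp
  have cd: "card ({..<?M j} - ?M ` {..<n-1}) = ?M j - j"
    unfolding eq using card_Diff_subset[OF _ sub] cj by simp
  have "card (As g) = 2 ^ (d - card ({..<?M j} - ?M ` {..<n-1}))"
    unfolding As_def by (rule cube_card_fix) (use Mp_le_d[OF bb g, of j] in auto)
  then show "card (As g) = 2 ^ (d - (Mp bb g j - j))" using cd by simp
qed

definition pins where "pins = card {k. k < n - 1 \<and> k \<noteq> i \<and> k \<le> j}"

lemma pins_val: "pins = (if j < n - 1 then j else j - 1)"
proof (cases "j < n - 1")
  case True
  then have "{k. k < n - 1 \<and> k \<noteq> i \<and> k \<le> j} = {..j} - {i}" by auto
  then show ?thesis using True ij by (simp add: pins_def)
next
  case False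
  then have "{k. k < n - 1 \<and> k \<noteq> i \<and> k \<le> j} = {..<n-1} - {i}" using ij by auto
  then show ?thesis using False ij i_lt by (simp add: pins_def)
qed

lemma exps: "g \<in> Gs \<Longrightarrow> card Ai * card (Aj g) * card (As g) = 2^(P + d + 2 + pins)"
proof -
  assume g: "g \<in> Gs"
  have jM: "j \<le> Mp bb g j" using card_As(2)[OF g] .
  have Md: "Mp bb g j \<le> d" using Mp_le_d[OF bb g] .
  have "card Ai * card (Aj g) * card (As g) = 2^((P+1) + (d - (d - Suc (Mp bb g j))) + (d - (Mp bb g j - j)))"
    unfolding card_Ai card_Aj[OF g] card_As(1)[OF g] by (simp only: power_add)
  also have "(P+1) + (d - (d - Suc (Mp bb g j))) + (d - (Mp bb g j - j)) = P + d + 2 + pins"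
  proof (cases "j < n - 1")
    case True
    then have "Mp bb g j < d" using Mp_lt_d[OF bb g] by simp
    then show ?thesis using True jM pins_val by simp
  next
    case False
    then have "Mp bb g j = d" by (simp add: Mp_def)
    then show ?thesis using False jM pins_val ij by simp
  qed
  finally show ?thesis .
qed

lemma prod_three:
  assumes "finite A" "x \<in> A" "y \<in> A" "z \<in> A" "x \<noteq> y" "x \<noteq> z" "y \<noteq> z"
  shows "prod f A = f x * f y * f z * prod f (A - {x, y, z})"
proof -
  have "prod f A = f x * prod f (A - {x})" using prod.remove[OF assms(1,2)] .
  also have "prod f (A - {x}) = f y * prod f (A - {x} - {y})"
    using prod.remove[of "A - {x}" y f] assms by auto
  also have "prod f (A - {x} - {y}) = f z * prod f (A - {x} - {y} - {z})"
    using prod.remove[of "A - {x} - {y}" z f] assms by auto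
  also have "A - {x} - {y} - {z} = A - {x, y, z}" by auto
  finally show ?thesis by (simp add: mult.assoc)
qed

lemma card_YY: "g \<in> Gs \<Longrightarrow> card (YY g) = 2^(P + d + 2 + pins) * (2^d)^(n-2)"
proof -
  assume g: "g \<in> Gs"
  let ?F = "\<lambda>v. if v = i then Ai else if v = j then Aj g else if v = n then As g else cube d"
  have "card (YY g) = (\<Prod>v<Suc n. card (?F v))" unfolding YY_def by (simp add: card_PiE)
  also have "\<dots> = card (?F i) * card (?F j) * card (?F n) * (\<Prod>v\<in>{..<Suc n} - {i, j, n}. card (?F v))"
    by (rule prod_three) (use ij in auto)
  also have "(\<Prod>v\<in>{..<Suc n} - {i, j, n}. card (?F v)) = (\<Prod>v\<in>{..<Suc n} - {i, j, n}. 2^d)"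
    by (rule prod.cong) (auto simp: cube_card)
  also have "\<dots> = (2^d)^(n-2)"
  proof -
    have "card ({..<Suc n} - {i, j, n}) = n - 2" using ij by (subst card_Diff_subset) auto
    then show ?thesis by simp
  qed
  finally show ?thesis using exps[OF g] ij by simp
qed

lemma finite_G: "finite (G k)" by (auto simp: G_def)

lemma card_LS: "card LS = (\<Prod>k<n-1. card (G k)) * (2^(P + d + 2 + pins) * (2^d)^(n-2))"
proof -
  have fin1: "finite (PiE {..<n-1} G)" by (rule finite_PiE) (auto simp: finite_G)
  have fin2: "finite (YY g)" for g unfolding YY_def
    by (rule finite_PiE) (auto simp: Ai_def Aj_def As_def)
  have "card LS = card (Sigma (PiE {..<n-1} G) YY)" unfolding LS_def by (simp add: card_cartesian_product_singleton)
  also have "\<dots> = (\<Sum>g\<in>PiE {..<n-1} G. card (YY g))" using fin1 fin2 by (simp add: card_SigmaI)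
  also have "\<dots> = (\<Sum>g\<in>PiE {..<n-1} G. 2^(P + d + 2 + pins) * (2^d)^(n-2))"
    by (rule sum.cong) (use PiG_Gs card_YY in auto)
  also have "\<dots> = card (PiE {..<n-1} G) * (2^(P + d + 2 + pins) * (2^d)^(n-2))" by simp
  also have "card (PiE {..<n-1} G) = (\<Prod>k<n-1. card (G k))" by (simp add: card_PiE)
  finally show ?thesis .
qed


lemma card_S: "card S = NB * K^(n-1) * (2^d)^(Suc n)"
  by (simp add: S_def Gs_def Ys_def card_cartesian_product card_PiE cube_card)

lemma LS_bound:
  fixes e :: real
  assumes e: "0 \<le> e" "e \<le> 1"
    and Gk: "\<And>k. k < n-1 \<Longrightarrow> k \<noteq> i \<Longrightarrow> k \<le> j \<Longrightarrow> (1-e)*K \<le> 2 * real (card (G k))"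
  shows "(1-e)^(n-2) * real (card S) \<le> real (card LS) * (real NB * real K * 2^(2*d - P - 2))"
proof -
  define Pr where "Pr = (\<Prod>k<n-1. card (G k))"
  define h where "h k = real (card (G k)) * (if k \<noteq> i \<and> k \<le> j then 2 else 1)" for k
  have "(\<Prod>k<n-1. (if k \<noteq> i \<and> k \<le> j then 2 else 1::real)) = 2 ^ card ({..<n-1} \<inter> {k. k \<noteq> i \<and> k \<le> j})"
    by (simp add: prod.If_cases)
  also have "{..<n-1} \<inter> {k. k \<noteq> i \<and> k \<le> j} = {k. k < n - 1 \<and> k \<noteq> i \<and> k \<le> j}" by auto
  finally have p2: "(\<Prod>k<n-1. (if k \<noteq> i \<and> k \<le> j then 2 else 1::real)) = 2 ^ pins" by (simp add: pins_def)
  have "real Pr * 2^pins = (\<Prod>k<n-1. h k)"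
    unfolding Pr_def h_def prod.distrib p2 by simp
  also have "\<dots> = h i * (\<Prod>k\<in>{..<n-1} - {i}. h k)"
    using prod.remove[of "{..<n-1}" i h] i_lt by simp
  also have "h i = 1" by (simp add: h_def G_def)
  finally have eqP: "real Pr * 2^pins = (\<Prod>k\<in>{..<n-1} - {i}. h k)" by simp
  have ge: "(\<Prod>k\<in>{..<n-1} - {i}. (1-e)*K) \<le> (\<Prod>k\<in>{..<n-1} - {i}. h k)"
  proof (rule prod_mono)
    fix k assume k: "k \<in> {..<n-1} - {i}"
    have nn: "0 \<le> (1-e)*K" using e by simp
    show "0 \<le> (1-e)*K \<and> (1-e)*K \<le> h k"
    proof (cases "k \<le> j")
      case True
      then show ?thesis using Gk[of k] k nn by (simp add: h_def)
    next
      case False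
      then have "card (G k) = K" using ij by (simp add: G_def)
      moreover have "(1-e)*K \<le> 1 * real K" using e by (intro mult_right_mono) auto
      ultimately show ?thesis using nn False by (simp add: h_def)
    qed
  qed
  have cnt: "(\<Prod>k\<in>{..<n-1} - {i}. (1-e)*K) = ((1-e)*K)^(n-2)"
    using i_lt by (simp add: card_Diff_subset numeral_2_eq_2)
  have A: "((1-e)*K)^(n-2) \<le> real Pr * 2^pins" using eqP ge cnt by simp
  define m where "m = n - 2"
  have nm: "n = m + 2" using ij by (simp add: m_def)
  have P2: "P + 2 \<le> 2*d" using P_lt by simp
  have dn: "d * Suc n = d * m + 3 * d" using nm by (simp add: algebra_simps)
  have ex: "P+d+2+pins + (2*d-P-2) + d*(n-2) = pins + d*Suc n"
    using P2 dn m_def by simp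
  have pw: "(2::real)^(P+d+2+pins) * 2^(2*d-P-2) * (2^d)^(n-2) = 2^pins * (2^d)^(Suc n)"
    by (simp only: power_mult[symmetric] power_add[symmetric] ex)
  have KK: "real K^(n-1) = real K * real K^(n-2)" using nm by simp
  have "(1-e)^(n-2) * real (card S) = (1-e)^(n-2) * (real NB * (real K * real K^(n-2)) * (2^d)^(Suc n))"
    unfolding card_S using KK by simp
  also have "\<dots> = ((1-e)*K)^(n-2) * (real NB * real K * (2^d)^(Suc n))"
    by (simp only: power_mult_distrib mult_ac)
  also have "\<dots> \<le> (real Pr * 2^pins) * (real NB * real K * (2^d)^(Suc n))"
    by (rule mult_right_mono[OF A]) simp
  also have "\<dots> = real Pr * (2^pins * (2^d)^(Suc n)) * (real NB * real K)"
    by (simp only: mult_ac)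
  also have "\<dots> = real Pr * (2^(P+d+2+pins) * 2^(2*d-P-2) * (2^d)^(n-2)) * (real NB * real K)"
    unfolding pw ..
  also have "\<dots> = real (card LS) * (real NB * real K * 2^(2*d - P - 2))"
    unfolding card_LS Pr_def by (simp only: of_nat_mult of_nat_power of_nat_numeral mult_ac)
  finally show ?thesis .
qed


lemma fiber_bound:
  fixes e :: real
  assumes e: "0 \<le> e" "e \<le> 1"
    and balc: "\<And>k. k < n-1 \<Longrightarrow> k \<noteq> i \<Longrightarrow> k \<le> j \<Longrightarrow> \<bar>\<Sum>g<K. sg (c ! pos (bb+k) g)\<bar> \<le> e * K"
  shows "(1-e)^(n-2) * real (card S) \<le> real (card {s\<in>S. Xs' s i = a \<and> Xs' s j = c}) * (real NB * real K * 2^(2*d - P - 2))"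
proof -
  have finS: "finite S" unfolding S_def Gs_def Ys_def by (intro finite_cartesian_product finite_PiE) auto
  have sub: "LS \<subseteq> {s\<in>S. Xs' s i = a \<and> Xs' s j = c}" using LS_sub LS_fiber by (auto simp: Xs'_def)
  have cle: "card LS \<le> card {s\<in>S. Xs' s i = a \<and> Xs' s j = c}" using finS by (intro card_mono[OF _ sub]) auto
  have Gk: "(1-e)*K \<le> 2 * real (card (G k))" if k: "k < n-1" "k \<noteq> i" "k \<le> j" for k
  proof (cases "k < j")
    case True
    then show ?thesis using sg_count(1)[OF balc[OF k]] k by (simp add: G_def)
  next
    case False
    then have "k = j" using k by simp
    then show ?thesis using sg_count(2)[OF balc[OF k]] k by (simp add: G_def)
  qed
  have "(1-e)^(n-2) * real (card S) \<le> real (card LS) * (real NB * real K * 2^(2*d - P - 2))"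
    by (rule LS_bound[OF e Gk])
  also have "\<dots> \<le> real (card {s\<in>S. Xs' s i = a \<and> Xs' s j = c}) * (real NB * real K * 2^(2*d - P - 2))"
    using cle by (intro mult_right_mono) auto
  finally show ?thesis .
qed

end
end


definition idx :: "'a::linorder set \<Rightarrow> 'a \<Rightarrow> nat" where "idx V w = card {u\<in>V. u < w}"

lemma idxV_lt: "finite V \<Longrightarrow> w \<in> V \<Longrightarrow> idx V w < card V"
  unfolding idx_def by (rule psubset_card_mono) auto

lemma idxV_mono:
  assumes "finite V" "u \<in> V" "w \<in> V" "u < w"
  shows "idx V u < idx V w"
  unfolding idx_def
proof (rule psubset_card_mono)
  show "finite {x \<in> V. x < w}" using assms by simp
  show "{x \<in> V. x < u} \<subset> {x \<in> V. x < w}" using assms by auto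
qed

lemma ordered_graph_E:
  assumes "ordered_graph V E" "f \<in> E"
  shows "\<exists>u w. f = {u, w} \<and> u \<in> V \<and> w \<in> V \<and> u < w"
proof -
  obtain u w where "f = {u, w}" "u \<in> V" "w \<in> V" "u \<noteq> w" using assms unfolding ordered_graph_def by blast
  then show ?thesis
  proof (cases "u < w")
    case True
    then show ?thesis using \<open>f = {u, w}\<close> \<open>u \<in> V\<close> \<open>w \<in> V\<close> by blast
  next
    case False
    then have "w < u" using \<open>u \<noteq> w\<close> by auto
    moreover have "f = {w, u}" using \<open>f = {u, w}\<close> by (simp add: insert_commute)
    ultimately show ?thesis using \<open>u \<in> V\<close> \<open>w \<in> V\<close> by blast
  qed
qed

lemma ordered_graph_finE: "ordered_graph V E \<Longrightarrow> finite E"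
proof -
  assume og: "ordered_graph V E"
  then have "E \<subseteq> Pow V" unfolding ordered_graph_def by auto
  moreover have "finite (Pow V)" using og unfolding ordered_graph_def by simp
  ultimately show ?thesis by (rule finite_subset)
qed

context cons
begin

definition emb :: "'a::linorder set \<Rightarrow> nat \<times> (nat \<Rightarrow> nat) \<times> (nat \<Rightarrow> bool list) \<Rightarrow> 'a \<Rightarrow> bool list" where
  "emb V s w = Xs' s (idx V w)"

lemma S_mem: "s \<in> S \<Longrightarrow> fst s < NB \<and> fst (snd s) \<in> Gs"
  by (auto simp: S_def)

lemma emb_lex:
  assumes "finite V" "n = card V" "s \<in> S" "u \<in> V" "w \<in> V" "u < w"
  shows "lex_less (emb V s u) (emb V s w)"
proof -
  have "idx V u < idx V w" "idx V w < n" using idxV_mono idxV_lt assms by auto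
  then show ?thesis unfolding emb_def Xs'_def using Xs_lex S_mem[OF assms(3)] by blast
qed

lemma emb_in:
  assumes "finite V" "n = card V" "s \<in> S"
  shows "emb V s \<in> embeddings V E d"
  unfolding embeddings_def using emb_lex[OF assms] by (auto simp: emb_def Xs'_def Xs_cube)

lemma emb_inj:
  assumes "finite V" "n = card V" "s \<in> S"
  shows "inj_on (emb V s) V"
proof (rule inj_onI)
  fix u w assume uw: "u \<in> V" "w \<in> V" "emb V s u = emb V s w"
  show "u = w"
  proof (rule ccontr)
    assume "u \<noteq> w"
    then have "u < w \<or> w < u" by auto
    then show False
    proof
      assume "u < w"
      then have "lex_less (emb V s u) (emb V s w)" using emb_lex[OF assms] uw by blast
      then show False using uw by (simp add: lex_less_def)
    next
      assume "w < u"
      then have "lex_less (emb V s w) (emb V s u)" using emb_lex[OF assms] uw by blast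
      then show False using uw by (simp add: lex_less_def)
    qed
  qed
qed

lemma edge_bound:
  fixes e :: real
  assumes e: "0 \<le> e" "e \<le> 1" and ij: "i < j" "j < n"
    and r: "r < card L" "n - 2 \<le> r div K" "r div K < NB"
    and ac: "a \<in> cube d" "c \<in> cube d" "\<forall>p < ls!r - 1. a!p = c!p" "\<not> a!(ls!r - 1)" "c!(ls!r - 1)"
    and balc: "\<forall>\<beta>. \<beta> < card L div K \<longrightarrow> \<beta> \<noteq> r div K \<longrightarrow> \<beta> \<le> r div K + n \<longrightarrow> r div K \<le> \<beta> + n
                 \<longrightarrow> \<bar>\<Sum>g<K. sg (c ! pos \<beta> g)\<bar> \<le> e * K"
  shows "(1-e)^(n-2) * real (card S) \<le> real (card {s\<in>S. Xs' s i = a \<and> Xs' s j = c}) * (real NB * real K * 2^(2*d - (ls!r - 1) - 2))"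
proof (rule fiber_bound[where bb="r div K - i" and i=i and j=j and gz="r mod K" and P="ls!r - 1" and a=a and c=c])
  have iK: "i \<le> r div K" using ij r by simp
  show "r div K - i < NB" using r by simp
  show "i < j" "j < n" using ij by auto
  show "r mod K < K" using Kpos by simp
  show "pos (r div K - i + i) (r mod K) = ls ! r - 1" using iK by (simp add: pos_def)
  show "a \<in> cube d" "c \<in> cube d" "\<forall>p < ls!r - 1. a!p = c!p" "\<not> a!(ls!r - 1)" "c!(ls!r - 1)" using ac by auto
  show "0 \<le> e" "e \<le> 1" using e by auto
  have NBn: "NB + n \<le> card L div K" using room Kpos by (simp add: less_eq_div_iff_mult_less_eq)
  fix k assume k: "k < n - 1" "k \<noteq> i" "k \<le> j"
  show "\<bar>\<Sum>g<K. sg (c ! pos (r div K - i + k) g)\<bar> \<le> e * K"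
    using balc[rule_format, of "r div K - i + k"] k iK r NBn ij by simp
qed

end


lemma pairs_with:
  assumes l: "1 \<le> l" "l \<le> d" and B: "B \<subseteq> cube d"
  shows "card {q \<in> pairs_at d l. \<exists>y\<in>q. y \<in> B} \<le> card B * 2^(d-l)"
proof -
  define Pt where "Pt y = {x\<in>cube d. \<forall>p\<in>{..<l}. x!p = (y[l-1 := \<not> y!(l-1)])!p}" for y :: "bool list"
  have finB: "finite B" using B finite_subset cube_finite by blast
  have sub: "{q \<in> pairs_at d l. \<exists>y\<in>q. y \<in> B} \<subseteq> (\<lambda>(y,x). {x,y}) ` Sigma B Pt"
  proof
    fix q assume "q \<in> {q \<in> pairs_at d l. \<exists>y\<in>q. y \<in> B}"
    then obtain x y where q: "q = {x,y}" "x \<in> cube d" "y \<in> cube d" "x \<noteq> y" "delta x y = l" and ex: "\<exists>z\<in>q. z \<in> B"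
      unfolding pairs_at_def by blast
    have dp: "x!(l-1) \<noteq> y!(l-1)" "\<forall>p<l-1. x!p = y!p" using delta_props[OF q(2,3,4)] q(5) by auto
    have ly: "length y = d" "length x = d" using q by (auto simp: cube_def)
    have P1: "x \<in> Pt y"
      unfolding Pt_def using q(2) dp ly l by (auto simp: nth_list_update)
    have P2: "y \<in> Pt x"
      unfolding Pt_def using q(3) dp ly l by (auto simp: nth_list_update)
    show "q \<in> (\<lambda>(y,x). {x,y}) ` Sigma B Pt"
    proof (cases "y \<in> B")
      case True
      then show ?thesis using P1 q(1) by (auto intro!: image_eqI[of _ _ "(y,x)"])
    next
      case False
      then have "x \<in> B" using ex q(1) by auto
      then show ?thesis using P2 q(1) by (auto intro!: image_eqI[of _ _ "(x,y)"])
    qed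
  qed
  have cP: "card (Pt y) = 2^(d-l)" for y
  proof -
    have "card (Pt y) = 2^(d - card {..<l})" unfolding Pt_def by (rule cube_card_fix) (use l in auto)
    then show ?thesis by simp
  qed
  have finS: "finite (Sigma B Pt)" using finB by (auto simp: Pt_def)
  have "card {q \<in> pairs_at d l. \<exists>y\<in>q. y \<in> B} \<le> card ((\<lambda>(y,x). {x,y}) ` Sigma B Pt)"
    by (rule card_mono[OF finite_imageI[OF finS] sub])
  also have "\<dots> \<le> card (Sigma B Pt)" by (rule card_image_le[OF finS])
  also have "\<dots> = (\<Sum>y\<in>B. card (Pt y))" by (rule card_SigmaI) (use finB in \<open>auto simp: Pt_def\<close>)
  also have "\<dots> = card B * 2^(d-l)" by (simp add: cP)
  finally show ?thesis .
qed

context cons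
begin

lemma S_finite: "finite S" unfolding S_def Gs_def Ys_def by (intro finite_cartesian_product finite_PiE) auto

lemma pair_bound:
  fixes e :: real and V :: "'a::linorder set"
  assumes og: "ordered_graph V E" and nV: "n = card V" and e: "0 \<le> e" "e \<le> 1"
    and r: "r < card L" "n - 2 \<le> r div K" "r div K < NB"
    and q: "q \<in> pairs_at d (ls!r)"
    and qg: "\<forall>y\<in>q. y!(ls!r - 1) \<longrightarrow> (\<forall>\<beta>. \<beta> < card L div K \<longrightarrow> \<beta> \<noteq> r div K \<longrightarrow> \<beta> \<le> r div K + n \<longrightarrow> r div K \<le> \<beta> + n
                 \<longrightarrow> \<bar>\<Sum>g<K. sg (y ! pos \<beta> g)\<bar> \<le> e * K)"
  shows "(1-e)^(n-2) * real (card E) * real (card S) \<le> real (card {s\<in>S. q \<in> image_graph (emb V s) E}) * (real NB * real K * 2^(2*d - (ls!r - 1) - 2))"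
proof -
  define l where "l = ls!r"
  define T where "T = real NB * real K * 2^(2*d - (ls!r - 1) - 2)"
  obtain x y where xy: "q = {x,y}" "x \<in> cube d" "y \<in> cube d" "x \<noteq> y" "delta x y = l"
    using q unfolding pairs_at_def l_def by blast
  have dp: "x!(l-1) \<noteq> y!(l-1)" "\<forall>p<l-1. x!p = y!p" using delta_props[OF xy(2,3,4)] xy(5) by auto
  obtain a c where ac: "q = {a,c}" "a \<in> cube d" "c \<in> cube d" "\<forall>p<l-1. a!p = c!p" "\<not> a!(l-1)" "c!(l-1)"
  proof (cases "x!(l-1)")
    case True
    then show ?thesis using that[of y x] xy dp by (auto simp: insert_commute)
  next
    case False
    then show ?thesis using that[of x y] xy dp by auto
  qed
  have balc: "\<forall>\<beta>. \<beta> < card L div K \<longrightarrow> \<beta> \<noteq> r div K \<longrightarrow> \<beta> \<le> r div K + n \<longrightarrow> r div K \<le> \<beta> + n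
                 \<longrightarrow> \<bar>\<Sum>g<K. sg (c ! pos \<beta> g)\<bar> \<le> e * K"
    using qg ac unfolding l_def by auto
  have finV: "finite V" using og unfolding ordered_graph_def by simp
  have finE: "finite E" using og by (rule ordered_graph_finE)
  define A where "A f = {s\<in>S. emb V s ` f = q}" for f
  have each: "(1-e)^(n-2) * real (card S) \<le> real (card (A f)) * T" if f: "f \<in> E" for f
  proof -
    obtain u w where uw: "f = {u,w}" "u \<in> V" "w \<in> V" "u < w" using ordered_graph_E[OF og f] by blast
    define i where "i = idx V u"
    define j where "j = idx V w"
    have ij: "i < j" "j < n" using idxV_mono[OF finV uw(2,3,4)] idxV_lt[OF finV uw(3)] nV
      by (auto simp: i_def j_def)
    have "(1-e)^(n-2) * real (card S) \<le> real (card {s\<in>S. Xs' s i = a \<and> Xs' s j = c}) * T"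
      unfolding T_def by (rule edge_bound[OF e ij r ac(2,3) ac(4,5,6)[unfolded l_def] balc])
    also have "card {s\<in>S. Xs' s i = a \<and> Xs' s j = c} \<le> card (A f)"
    proof (rule card_mono)
      show "finite (A f)" using S_finite by (simp add: A_def)
      show "{s\<in>S. Xs' s i = a \<and> Xs' s j = c} \<subseteq> A f"
        using uw ac(1) by (auto simp: A_def emb_def i_def j_def)
    qed
    then have "real (card {s\<in>S. Xs' s i = a \<and> Xs' s j = c}) * T \<le> real (card (A f)) * T"
      unfolding T_def by (intro mult_right_mono) auto
    finally show ?thesis .
  qed
  have un: "{s\<in>S. q \<in> image_graph (emb V s) E} = (\<Union>f\<in>E. A f)"
    by (auto simp: A_def image_graph_def)
  have disj: "card (\<Union>f\<in>E. A f) = (\<Sum>f\<in>E. card (A f))"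
  proof (rule card_UN_disjoint[OF finE])
    show "\<forall>f\<in>E. finite (A f)" using S_finite by (simp add: A_def)
    show "\<forall>f\<in>E. \<forall>f'\<in>E. f \<noteq> f' \<longrightarrow> A f \<inter> A f' = {}"
    proof (intro ballI impI)
      fix f f' assume ff: "f \<in> E" "f' \<in> E" "f \<noteq> f'"
      show "A f \<inter> A f' = {}"
      proof (rule ccontr)
        assume "A f \<inter> A f' \<noteq> {}"
        then obtain s where s: "s \<in> S" "emb V s ` f = q" "emb V s ` f' = q" by (auto simp: A_def)
        have "f \<subseteq> V" "f' \<subseteq> V" using ordered_graph_E[OF og ff(1)] ordered_graph_E[OF og ff(2)] by auto
        then have "f = f'" using s emb_inj[OF finV nV s(1)] by (metis inj_on_image_eq_iff)
        then show False using ff by simp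
      qed
    qed
  qed
  have "(1-e)^(n-2) * real (card E) * real (card S) = (\<Sum>f\<in>E. (1-e)^(n-2) * real (card S))" by simp
  also have "\<dots> \<le> (\<Sum>f\<in>E. real (card (A f)) * T)" by (rule sum_mono) (rule each)
  also have "\<dots> = real (\<Sum>f\<in>E. card (A f)) * T" by (simp add: sum_distrib_right)
  also have "\<dots> = real (card {s\<in>S. q \<in> image_graph (emb V s) E}) * T" using un disj by simp
  finally show ?thesis unfolding T_def .
qed

end


context cons
begin

lemma pos_inj: "\<beta> < card L div K \<Longrightarrow> inj_on (pos \<beta>) {..<K}"
proof (rule inj_onI)
  fix g g' assume b: "\<beta> < card L div K" and gg: "g \<in> {..<K}" "g' \<in> {..<K}" "pos \<beta> g = pos \<beta> g'"
  have lt: "\<beta>*K + x < card L" if "x < K" for x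
  proof -
    have "\<beta>*K + x < (\<beta>+1)*K" using that by simp
    also have "\<dots> \<le> (card L div K) * K" using b by (intro mult_le_mono1) auto
    also have "\<dots> \<le> card L" by simp
    finally show ?thesis .
  qed
  show "g = g'"
  proof (rule ccontr)
    assume "g \<noteq> g'"
    then have "g < g' \<or> g' < g" by auto
    then show False
    proof
      assume "g < g'"
      then have "pos \<beta> g < pos \<beta> g'" using lt[of g'] gg by (intro pos_mono) auto
      then show False using gg by simp
    next
      assume "g' < g"
      then have "pos \<beta> g' < pos \<beta> g" using lt[of g] gg by (intro pos_mono) auto
      then show False using gg by simp
    qed
  qed
qed

lemma pos_rng: "\<beta> < card L div K \<Longrightarrow> pos \<beta> ` {..<K} \<subseteq> {..<d}"
proof
  fix p assume b: "\<beta> < card L div K" and "p \<in> pos \<beta> ` {..<K}"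
  then obtain x where x: "x < K" "p = pos \<beta> x" by auto
  have "\<beta>*K + x < (\<beta>+1)*K" using x by simp
  also have "\<dots> \<le> (card L div K) * K" using b by (intro mult_le_mono1) auto
  also have "\<dots> \<le> card L" by simp
  finally show "p \<in> {..<d}" using pos_lt x by auto
qed

lemma badpairs:
  fixes e :: real
  assumes e: "e > 0" and r: "r < card L"
  shows "real (card {q \<in> pairs_at d (ls!r). \<not> (\<forall>y\<in>q. y!(ls!r - 1) \<longrightarrow> (\<forall>\<beta>. \<beta> < card L div K \<longrightarrow> \<beta> \<noteq> r div K \<longrightarrow> \<beta> \<le> r div K + n \<longrightarrow> r div K \<le> \<beta> + n
                 \<longrightarrow> \<bar>\<Sum>g<K. sg (y ! pos \<beta> g)\<bar> \<le> e * K))})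
     \<le> real (2*n+1) * (real K * 2^d / (e*K)^2 * 2^(d - ls!r))"
proof -
  define l where "l = ls!r"
  have l: "1 \<le> l" "l \<le> d" using ls_range[OF r] by (auto simp: l_def)
  define Near where "Near = {\<beta>. \<beta> < card L div K \<and> \<beta> \<noteq> r div K \<and> \<beta> \<le> r div K + n \<and> r div K \<le> \<beta> + n}"
  define Bd where "Bd \<beta> = {y\<in>cube d. e*K < \<bar>\<Sum>g<K. sg (y ! pos \<beta> g)\<bar>}" for \<beta>
  define Bad where "Bad = {q \<in> pairs_at d (ls!r). \<not> (\<forall>y\<in>q. y!(ls!r - 1) \<longrightarrow> (\<forall>\<beta>. \<beta> < card L div K \<longrightarrow> \<beta> \<noteq> r div K \<longrightarrow> \<beta> \<le> r div K + n \<longrightarrow> r div K \<le> \<beta> + n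
                 \<longrightarrow> \<bar>\<Sum>g<K. sg (y ! pos \<beta> g)\<bar> \<le> e * K))}"
  have pc: "q \<in> pairs_at d l \<Longrightarrow> y \<in> q \<Longrightarrow> y \<in> cube d" for q y
    unfolding pairs_at_def by auto
  have sub: "Bad \<subseteq> (\<Union>\<beta>\<in>Near. {q \<in> pairs_at d l. \<exists>y\<in>q. y \<in> Bd \<beta>})"
  proof
    fix q assume "q \<in> Bad"
    then obtain y \<beta> where "q \<in> pairs_at d l" "y \<in> q" "\<beta> \<in> Near" "\<not> \<bar>\<Sum>g<K. sg (y ! pos \<beta> g)\<bar> \<le> e * K"
      unfolding Bad_def Near_def l_def by blast
    then show "q \<in> (\<Union>\<beta>\<in>Near. {q \<in> pairs_at d l. \<exists>y\<in>q. y \<in> Bd \<beta>})"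
      using pc by (auto simp: Bd_def not_le)
  qed
  have finNear: "finite Near" unfolding Near_def by auto
  have cNear: "card Near \<le> 2*n+1"
  proof -
    have "Near \<subseteq> {r div K - n .. r div K + n}" unfolding Near_def by auto
    then have "card Near \<le> card {r div K - n .. r div K + n}" by (intro card_mono) auto
    also have "\<dots> \<le> 2*n+1" by simp
    finally show ?thesis .
  qed
  have cBd: "real (card (Bd \<beta>)) \<le> real K * 2^d / (e*K)^2" if "\<beta> \<in> Near" for \<beta>
  proof -
    have b: "\<beta> < card L div K" using that by (simp add: Near_def)
    have "e * K > 0" using e Kpos by simp
    then show ?thesis unfolding Bd_def by (rule cheb_count[OF pos_inj[OF b] pos_rng[OF b]])
  qed
  have finP: "finite (pairs_at d l)"
  proof -
    have "pairs_at d l \<subseteq> Pow (cube d)" unfolding pairs_at_def by auto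
    then show ?thesis using finite_subset by (metis cube_finite finite_Pow_iff)
  qed
  have "real (card Bad) \<le> real (card (\<Union>\<beta>\<in>Near. {q \<in> pairs_at d l. \<exists>y\<in>q. y \<in> Bd \<beta>}))"
    using sub finNear finP by (intro of_nat_mono card_mono) auto
  also have "\<dots> \<le> real (\<Sum>\<beta>\<in>Near. card {q \<in> pairs_at d l. \<exists>y\<in>q. y \<in> Bd \<beta>})"
    by (intro of_nat_mono card_UN_le finNear)
  also have "\<dots> = (\<Sum>\<beta>\<in>Near. real (card {q \<in> pairs_at d l. \<exists>y\<in>q. y \<in> Bd \<beta>}))" by simp
  also have "\<dots> \<le> (\<Sum>\<beta>\<in>Near. real K * 2^d / (e*K)^2 * 2^(d - l))"
  proof (rule sum_mono)
    fix \<beta> assume b: "\<beta> \<in> Near"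
    have "card {q \<in> pairs_at d l. \<exists>y\<in>q. y \<in> Bd \<beta>} \<le> card (Bd \<beta>) * 2^(d-l)"
      by (rule pairs_with[OF l]) (auto simp: Bd_def)
    then have "real (card {q \<in> pairs_at d l. \<exists>y\<in>q. y \<in> Bd \<beta>}) \<le> real (card (Bd \<beta>) * 2^(d-l))"
      by (rule of_nat_mono)
    also have "\<dots> = real (card (Bd \<beta>)) * 2^(d-l)" by simp
    also have "\<dots> \<le> real K * 2^d / (e*K)^2 * 2^(d - l)"
      using cBd[OF b] by (intro mult_right_mono) auto
    finally show "real (card {q \<in> pairs_at d l. \<exists>y\<in>q. y \<in> Bd \<beta>}) \<le> real K * 2^d / (e*K)^2 * 2^(d - l)" .
  qed
  also have "\<dots> = real (card Near) * (real K * 2^d / (e*K)^2 * 2^(d - l))" by simp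
  also have "\<dots> \<le> real (2*n+1) * (real K * 2^d / (e*K)^2 * 2^(d - l))"
    using cNear by (intro mult_right_mono) auto
  finally show ?thesis unfolding Bad_def l_def .
qed

lemma badlevels: "card {r. r < card L \<and> \<not> (n - 2 \<le> r div K \<and> r div K < NB)} \<le> (n-2)*K + (card L - NB*K)"
proof -
  have "{r. r < card L \<and> \<not> (n - 2 \<le> r div K \<and> r div K < NB)} \<subseteq> {..<(n-2)*K} \<union> {NB*K..<card L}"
  proof
    fix r assume "r \<in> {r. r < card L \<and> \<not> (n - 2 \<le> r div K \<and> r div K < NB)}"
    then have r: "r < card L" "r div K < n - 2 \<or> NB \<le> r div K" by auto
    show "r \<in> {..<(n-2)*K} \<union> {NB*K..<card L}"
    proof (cases "r div K < n - 2")
      case True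
      then have "r < (n-2)*K" using div_less_iff_less_mult[OF Kpos] by blast
      then show ?thesis by simp
    next
      case False
      then have "NB \<le> r div K" using r(2) by simp
      then have "NB*K \<le> r" using less_eq_div_iff_mult_less_eq[OF Kpos] by blast
      then show ?thesis using r(1) by simp
    qed
  qed
  then have "card {r. r < card L \<and> \<not> (n - 2 \<le> r div K \<and> r div K < NB)} \<le> card ({..<(n-2)*K} \<union> {NB*K..<card L})"
    by (intro card_mono) auto
  also have "\<dots> \<le> card {..<(n-2)*K} + card {NB*K..<card L}" by (rule card_Un_le)
  finally show ?thesis by simp
qed

end


lemma main_lt1:
  fixes V :: "'a::linorder set" and E :: "'a set set" and \<epsilon> :: real
  assumes og: "ordered_graph V E" and \<epsilon>: "0 < \<epsilon>" "\<epsilon> < 1"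
  shows "\<exists>C::nat. \<forall>(d::nat) (L::nat set). L \<subseteq> {1..d} \<and> card L \<ge> C \<longrightarrow>
    (\<exists>\<Phi> :: ('a \<Rightarrow> bool list) pmf. set_pmf \<Phi> \<subseteq> embeddings V E d \<and>
      real (card {l \<in> L. real (card {p \<in> pairs_at d l.
            \<not> (measure_pmf.prob \<Phi> {\<phi>. p \<in> image_graph \<phi> E}
                 \<ge> (1 - \<epsilon>) * real (card E) / (real (card L) * real (tau l d)))})
          > \<epsilon> * real (tau l d)})
        \<le> \<epsilon> * real (card L))"
proof -
  define n where "n = card V"
  have finV: "finite V" using og unfolding ordered_graph_def by simp
  define e where "e = \<epsilon> / (real n + 1)"
  define K :: nat where "K = nat \<lceil>2 * (2*real n+1) / (\<epsilon> * e^2)\<rceil> + 1"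
  define C :: nat where "C = nat \<lceil>(2*real n+2) * real K / \<epsilon>\<rceil> + 1"
  have e0: "0 < e" using \<epsilon> by (simp add: e_def)
  have e1: "e \<le> 1"
  proof -
    have "\<epsilon> \<le> real n + 1" using \<epsilon> by simp
    then show ?thesis unfolding e_def by simp
  qed
  have ne: "real (n-2) * e \<le> \<epsilon>"
  proof -
    have "real (n-2) \<le> real n + 1" by simp
    then have "real (n-2) * \<epsilon> \<le> (real n + 1) * \<epsilon>" using \<epsilon> by (intro mult_right_mono) auto
    then show ?thesis unfolding e_def by (simp add: field_simps)
  qed
  have Kpos: "0 < K" by (simp add: K_def)
  have Kbig: "2 * (2*real n+1) / (\<epsilon> * e^2) \<le> real K"
    unfolding K_def by linarith
  show ?thesis
  proof (intro exI[of _ C] allI impI)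
    fix d :: nat and L :: "nat set"
    assume dL: "L \<subseteq> {1..d} \<and> C \<le> card L"
    define m where "m = card L"
    have mC: "(2*real n+2) * real K / \<epsilon> \<le> real m"
    proof -
      have "(2*real n+2) * real K / \<epsilon> \<le> real C" unfolding C_def by linarith
      also have "\<dots> \<le> real m" using dL by (simp add: m_def)
      finally show ?thesis .
    qed
    have mC2: "(2*real n+2) * real K \<le> \<epsilon> * real m" using mC \<epsilon> by (simp add: field_simps)
    have "(2*real n+2) * real K \<le> real m"
    proof -
      have X0: "0 \<le> (2*real n+2) * real K" by simp
      have "(2*real n+2) * real K * \<epsilon> \<le> (2*real n+2) * real K * 1"
        using \<epsilon> X0 by (intro mult_left_mono) auto
      then have "(2*real n+2) * real K \<le> (2*real n+2) * real K / \<epsilon>"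
        using \<epsilon> by (subst pos_le_divide_eq) auto
      then show ?thesis using mC by linarith
    qed
    then have mK: "(2*n+2) * K \<le> m" by (metis of_nat_le_iff of_nat_mult of_nat_add of_nat_numeral of_nat_1 mult_2)
    have mdK: "2*n+2 \<le> m div K" using mK Kpos by (simp add: less_eq_div_iff_mult_less_eq)
    define NB where "NB = m div K - n"
    have NBpos: "0 < NB" using mdK by (simp add: NB_def)
    have NBn: "NB + n = m div K" using mdK by (simp add: NB_def)
    have room: "(NB + n) * K \<le> card L" unfolding NBn m_def by simp
    interpret cons L d K NB n
      by unfold_locales (use dL Kpos room in auto)
    define \<Phi> where "\<Phi> = map_pmf (emb V) (pmf_of_set S)"
    have wit: "(0, (\<lambda>k\<in>{..<n-1}. 0), (\<lambda>v\<in>{..<Suc n}. replicate d False)) \<in> S"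
      unfolding S_def Gs_def Ys_def using NBpos Kpos by (auto simp: cube_def)
    then have Sne: "S \<noteq> {}" by blast
    have setP: "set_pmf \<Phi> \<subseteq> embeddings V E d"
      unfolding \<Phi>_def using Sne S_finite emb_in[OF finV n_def] by auto
    have prob: "measure_pmf.prob \<Phi> {\<phi>. p \<in> image_graph \<phi> E} = real (card {s\<in>S. p \<in> image_graph (emb V s) E}) / real (card S)" for p
    proof -
      have "measure_pmf.prob \<Phi> {\<phi>. p \<in> image_graph \<phi> E} = measure_pmf.prob (pmf_of_set S) (emb V -` {\<phi>. p \<in> image_graph \<phi> E})"
        unfolding \<Phi>_def by simp
      also have "\<dots> = real (card (S \<inter> emb V -` {\<phi>. p \<in> image_graph \<phi> E})) / real (card S)"
        using Sne S_finite by (simp add: measure_pmf_of_set)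
      also have "S \<inter> emb V -` {\<phi>. p \<in> image_graph \<phi> E} = {s\<in>S. p \<in> image_graph (emb V s) E}" by auto
      finally show ?thesis .
    qed
    have cSpos: "0 < real (card S)" using Sne S_finite by (simp add: card_gt_0_iff)
    have NBK: "NB * K \<le> m"
    proof -
      have "NB * K \<le> (NB + n) * K" by simp
      then show ?thesis unfolding m_def using room by (rule order.trans)
    qed
    define good where "good r \<longleftrightarrow> n - 2 \<le> r div K \<and> r div K < NB" for r
    have goodlev: "real (card {p \<in> pairs_at d (ls!r).
            \<not> (measure_pmf.prob \<Phi> {\<phi>. p \<in> image_graph \<phi> E}
                 \<ge> (1 - \<epsilon>) * real (card E) / (real (card L) * real (tau (ls!r) d)))}) \<le> \<epsilon> * real (tau (ls!r) d)"
      if r: "r < m" "good r" for r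
    proof -
      define l where "l = ls!r"
      have l: "1 \<le> l" "l \<le> d" using ls_range r by (auto simp: l_def m_def)
      have tau: "real (tau l d) = 2^(2*d - (l - 1) - 2)"
      proof -
        have "2*d - l - 1 = 2*d - (l - 1) - 2" using l by simp
        then show ?thesis by (simp add: tau_def)
      qed
      have taupos: "0 < real (tau l d)" by (simp add: tau_def)
      define QG where "QG q \<longleftrightarrow> (\<forall>y\<in>q. y!(ls!r - 1) \<longrightarrow> (\<forall>\<beta>. \<beta> < card L div K \<longrightarrow> \<beta> \<noteq> r div K \<longrightarrow> \<beta> \<le> r div K + n \<longrightarrow> r div K \<le> \<beta> + n
                 \<longrightarrow> \<bar>\<Sum>g<K. sg (y ! pos \<beta> g)\<bar> \<le> e * K))" for q
      have sub: "{p \<in> pairs_at d l. \<not> (measure_pmf.prob \<Phi> {\<phi>. p \<in> image_graph \<phi> E}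
                 \<ge> (1 - \<epsilon>) * real (card E) / (real (card L) * real (tau l d)))} \<subseteq> {q \<in> pairs_at d (ls!r). \<not> QG q}"
      proof
        fix p assume pm: "p \<in> {p \<in> pairs_at d l. \<not> (measure_pmf.prob \<Phi> {\<phi>. p \<in> image_graph \<phi> E}
                 \<ge> (1 - \<epsilon>) * real (card E) / (real (card L) * real (tau l d)))}"
        show "p \<in> {q \<in> pairs_at d (ls!r). \<not> QG q}"
        proof (rule ccontr)
          assume "p \<notin> {q \<in> pairs_at d (ls!r). \<not> QG q}"
          then have qg: "QG p" using pm by (auto simp: l_def)
          define cnt where "cnt = real (card {s\<in>S. p \<in> image_graph (emb V s) E})"
          have pb: "(1-e)^(n-2) * real (card E) * real (card S) \<le> cnt * (real NB * real K * 2^(2*d - (ls!r - 1) - 2))"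
            unfolding cnt_def
            by (rule pair_bound[OF og n_def less_imp_le[OF e0] e1 r(1)[unfolded m_def] _ _ _ qg[unfolded QG_def]])
               (use r pm in \<open>auto simp: good_def l_def\<close>)
          have bern: "1 - \<epsilon> \<le> (1-e)^(n-2)"
          proof -
            have "1 + real (n-2) * (-e) \<le> (1 + (-e))^(n-2)" using e1 by (intro Bernoulli_inequality) simp
            then show ?thesis using ne by simp
          qed
          have E0: "0 \<le> real (card E)" by simp
          have "(1-\<epsilon>) * real (card E) * real (card S) \<le> (1-e)^(n-2) * real (card E) * real (card S)"
            using bern by (intro mult_right_mono) auto
          also have "\<dots> \<le> cnt * (real NB * real K * real (tau l d))" using pb tau by (simp add: l_def)
          also have "\<dots> \<le> cnt * (real m * real (tau l d))"
          proof -
            have "real NB * real K \<le> real m" using NBK by (metis of_nat_le_iff of_nat_mult)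
            then show ?thesis using taupos by (intro mult_left_mono) (auto simp: cnt_def)
          qed
          finally have "(1-\<epsilon>) * real (card E) * real (card S) \<le> cnt * (real m * real (tau l d))" .
          moreover have "0 < real m * real (tau l d)" using taupos l r by (auto simp: m_def)
          ultimately have "(1-\<epsilon>) * real (card E) / (real m * real (tau l d)) \<le> cnt / real (card S)"
            using cSpos by (simp add: field_simps)
          then show False using pm prob by (simp add: cnt_def m_def)
        qed
      qed
      have fin: "finite {q \<in> pairs_at d (ls!r). \<not> QG q}"
      proof -
        have "pairs_at d (ls!r) \<subseteq> Pow (cube d)" unfolding pairs_at_def by auto
        then show ?thesis by (metis (no_types, lifting) cube_finite finite_Pow_iff finite_subset mem_Collect_eq subsetI)
      qed
      have "real (card {p \<in> pairs_at d l. \<not> (measure_pmf.prob \<Phi> {\<phi>. p \<in> image_graph \<phi> E}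
                 \<ge> (1 - \<epsilon>) * real (card E) / (real (card L) * real (tau l d)))}) \<le> real (card {q \<in> pairs_at d (ls!r). \<not> QG q})"
        by (intro of_nat_mono card_mono[OF fin sub])
      also have "\<dots> \<le> real (2*n+1) * (real K * 2^d / (e*K)^2 * 2^(d - ls!r))"
        unfolding QG_def using badpairs[OF e0] r by (simp add: m_def)
      also have "\<dots> \<le> \<epsilon> * real (tau l d)"
      proof -
        have t2: "(2::real)^d * 2^(d - l) = 2 * real (tau l d)"
        proof -
          have "d + (d - l) = Suc (2*d - l - 1)" using l by simp
          then show ?thesis by (simp add: tau_def power_add[symmetric])
        qed
        have "real (2*n+1) * (real K * 2^d / (e*K)^2 * 2^(d - ls!r)) = (2 * (2*real n+1) / (e^2 * K)) * real (tau l d)"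
          using t2 Kpos by (simp add: l_def power2_eq_square field_simps)
        also have "\<dots> \<le> \<epsilon> * real (tau l d)"
        proof (rule mult_right_mono)
          show "0 \<le> real (tau l d)" by simp
          have "2 * (2*real n+1) / (\<epsilon> * e^2) \<le> real K" by (rule Kbig)
          then have "2 * (2*real n+1) \<le> real K * (\<epsilon> * e^2)" using \<epsilon> e0 by (simp add: field_simps)
          then show "2 * (2*real n+1) / (e^2 * K) \<le> \<epsilon>" using e0 Kpos by (simp add: field_simps)
        qed
        finally show ?thesis .
      qed
      finally show ?thesis by (simp add: l_def)
    qed
    have setL: "set ls = L" using finL by (simp add: ls_def)
    have levsub: "{l \<in> L. real (card {p \<in> pairs_at d l.
            \<not> (measure_pmf.prob \<Phi> {\<phi>. p \<in> image_graph \<phi> E}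
                 \<ge> (1 - \<epsilon>) * real (card E) / (real (card L) * real (tau l d)))})
          > \<epsilon> * real (tau l d)} \<subseteq> (\<lambda>r. ls!r) ` {r. r < card L \<and> \<not> (n - 2 \<le> r div K \<and> r div K < NB)}"
    proof
      fix l assume lm: "l \<in> {l \<in> L. real (card {p \<in> pairs_at d l.
            \<not> (measure_pmf.prob \<Phi> {\<phi>. p \<in> image_graph \<phi> E}
                 \<ge> (1 - \<epsilon>) * real (card E) / (real (card L) * real (tau l d)))})
          > \<epsilon> * real (tau l d)}"
      then have "l \<in> set ls" using setL by auto
      then obtain r where r: "r < length ls" "l = ls!r" by (auto simp: in_set_conv_nth)
      have rm: "r < m" using r len_ls by (simp add: m_def)
      have "\<not> good r" using goodlev[OF rm] lm r by force
      then show "l \<in> (\<lambda>r. ls!r) ` {r. r < card L \<and> \<not> (n - 2 \<le> r div K \<and> r div K < NB)}"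
        using r rm by (auto simp: good_def m_def)
    qed
    have "card {l \<in> L. real (card {p \<in> pairs_at d l.
            \<not> (measure_pmf.prob \<Phi> {\<phi>. p \<in> image_graph \<phi> E}
                 \<ge> (1 - \<epsilon>) * real (card E) / (real (card L) * real (tau l d)))})
          > \<epsilon> * real (tau l d)} \<le> card ((\<lambda>r. ls!r) ` {r. r < card L \<and> \<not> (n - 2 \<le> r div K \<and> r div K < NB)})"
      by (rule card_mono[OF _ levsub]) auto
    also have "\<dots> \<le> card {r. r < card L \<and> \<not> (n - 2 \<le> r div K \<and> r div K < NB)}"
      by (rule card_image_le) auto
    also have "\<dots> \<le> (n-2)*K + (card L - NB*K)" by (rule badlevels)
    also have "\<dots> \<le> (2*n+2)*K"
    proof -
      have "m div K * K \<le> m" by simp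
      have "m < (m div K + 1) * K" using Kpos by (metis add.commute div_less_iff_less_mult less_add_one)
      then have "m < (NB + n + 1) * K" using NBn by simp
      then have h: "m < NB*K + n*K + K" by (simp add: algebra_simps)
      have "(n+1)*K = n*K + K" by simp
      then have "m - NB*K \<le> (n+1)*K" using h by linarith
      then have "(n-2)*K + (m - NB*K) \<le> n*K + (n+1)*K" by (intro add_mono) auto
      then show ?thesis by (simp add: m_def algebra_simps)
    qed
    finally have fin: "real (card {l \<in> L. real (card {p \<in> pairs_at d l.
            \<not> (measure_pmf.prob \<Phi> {\<phi>. p \<in> image_graph \<phi> E}
                 \<ge> (1 - \<epsilon>) * real (card E) / (real (card L) * real (tau l d)))})
          > \<epsilon> * real (tau l d)}) \<le> (2*real n+2) * real K"
      by (metis (no_types, lifting) of_nat_le_iff of_nat_mult of_nat_add of_nat_numeral of_nat_1 mult_2)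
    show "\<exists>\<Phi> :: ('a \<Rightarrow> bool list) pmf. set_pmf \<Phi> \<subseteq> embeddings V E d \<and>
      real (card {l \<in> L. real (card {p \<in> pairs_at d l.
            \<not> (measure_pmf.prob \<Phi> {\<phi>. p \<in> image_graph \<phi> E}
                 \<ge> (1 - \<epsilon>) * real (card E) / (real (card L) * real (tau l d)))})
          > \<epsilon> * real (tau l d)})
        \<le> \<epsilon> * real (card L)"
      using setP fin mC2 by (intro exI[of _ \<Phi>]) (auto simp: m_def)
  qed
qed



theorem lemma3p2:
  fixes V :: "'a::linorder set" and E :: "'a set set" and \<epsilon> :: real
  assumes "ordered_graph V E" and "\<epsilon> > 0"
  shows "\<exists>C::nat. \<forall>(d::nat) (L::nat set). L \<subseteq> {1..d} \<and> card L \<ge> C \<longrightarrow>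
    (\<exists>\<Phi> :: ('a \<Rightarrow> bool list) pmf. set_pmf \<Phi> \<subseteq> embeddings V E d \<and>
      real (card {l \<in> L. real (card {p \<in> pairs_at d l.
            \<not> (measure_pmf.prob \<Phi> {\<phi>. p \<in> image_graph \<phi> E}
                 \<ge> (1 - \<epsilon>) * real (card E) / (real (card L) * real (tau l d)))})
          > \<epsilon> * real (tau l d)})
        \<le> \<epsilon> * real (card L))"
proof (cases "\<epsilon> < 1")
  case True
  show ?thesis by (rule main_lt1[OF assms True])
next
  case False
  have h: "(0::real) < 1/2" "(1/2::real) < 1" by auto
  obtain C where C: "\<forall>(d::nat) (L::nat set). L \<subseteq> {1..d} \<and> card L \<ge> C \<longrightarrow>
    (\<exists>\<Phi> :: ('a \<Rightarrow> bool list) pmf. set_pmf \<Phi> \<subseteq> embeddings V E d \<and>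
      real (card {l \<in> L. real (card {p \<in> pairs_at d l.
            \<not> (measure_pmf.prob \<Phi> {\<phi>. p \<in> image_graph \<phi> E}
                 \<ge> (1 - 1/2) * real (card E) / (real (card L) * real (tau l d)))})
          > 1/2 * real (tau l d)})
        \<le> 1/2 * real (card L))"
    using main_lt1[OF assms(1) h] by (rule exE)
  show ?thesis
  proof (intro exI[of _ C] allI impI)
    fix d :: nat and L :: "nat set"
    assume hL: "L \<subseteq> {1..d} \<and> C \<le> card L"
    then obtain \<Phi> :: "('a \<Rightarrow> bool list) pmf" where \<Phi>: "set_pmf \<Phi> \<subseteq> embeddings V E d" using C by blast
    have nb: "{p \<in> pairs_at d l. \<not> (measure_pmf.prob \<Phi> {\<phi>. p \<in> image_graph \<phi> E}
                 \<ge> (1 - \<epsilon>) * real (card E) / (real (card L) * real (tau l d)))} = {}" for l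
    proof -
      have "(1 - \<epsilon>) * real (card E) / (real (card L) * real (tau l d)) \<le> 0"
        using False by (intro divide_nonpos_nonneg mult_nonpos_nonneg) auto
      then have "(1 - \<epsilon>) * real (card E) / (real (card L) * real (tau l d)) \<le> measure_pmf.prob \<Phi> A" for A
        using measure_nonneg[of "measure_pmf \<Phi>" A] by (rule order_trans)
      then show ?thesis by blast
    qed
    have emp: "{l \<in> L. real (card {p \<in> pairs_at d l.
            \<not> (measure_pmf.prob \<Phi> {\<phi>. p \<in> image_graph \<phi> E}
                 \<ge> (1 - \<epsilon>) * real (card E) / (real (card L) * real (tau l d)))})
          > \<epsilon> * real (tau l d)} = {}"
    proof -
      have "\<not> (\<epsilon> * real (tau l d) < 0)" for l using assms(2) by (simp add: not_less)
      then show ?thesis unfolding nb by simp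
    qed
    show "\<exists>\<Phi> :: ('a \<Rightarrow> bool list) pmf. set_pmf \<Phi> \<subseteq> embeddings V E d \<and>
      real (card {l \<in> L. real (card {p \<in> pairs_at d l.
            \<not> (measure_pmf.prob \<Phi> {\<phi>. p \<in> image_graph \<phi> E}
                 \<ge> (1 - \<epsilon>) * real (card E) / (real (card L) * real (tau l d)))})
          > \<epsilon> * real (tau l d)})
        \<le> \<epsilon> * real (card L)"
    proof (intro exI[of _ \<Phi>] conjI)
      show "set_pmf \<Phi> \<subseteq> embeddings V E d" by (rule \<Phi>)
      show "real (card {l \<in> L. real (card {p \<in> pairs_at d l.
            \<not> (measure_pmf.prob \<Phi> {\<phi>. p \<in> image_graph \<phi> E}
                 \<ge> (1 - \<epsilon>) * real (card E) / (real (card L) * real (tau l d)))})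
          > \<epsilon> * real (tau l d)})
        \<le> \<epsilon> * real (card L)" unfolding emp using assms(2) by simp
    qed
  qed
qed

end
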